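(* Suppose the prelimit coefficients $K^{(k)},L^{(k)}_i,M^{(k)}_i,N^{(k)}_{ij}$ satisfy Condition 1 (the Hudson–Parthasarathy conditions on $\mathcal D$, see context) and Assumptions 1–3 hold. Then the limit coefficients $K,L_i,M_i,N_{ij}$ of Assumption 3 satisfy on $\mathcal D_0=P_0\mathcal D$ the Hudson–Parthasarathy relations $$K+K^\dagger=-\sum_{i=1}^nL_iL_i^\dagger,\qquad M_i=-\sum_{j=1}^nN_{ij}L_j^\dagger,\qquad \sum_{j=1}^nN_{mj}N_{\ell j}^\dagger=\sum_{j=1}^nN_{jm}^\dagger N_{j\ell}=\delta_{m\ell}.$$
   Context: $\mathcal H$ is a separable complex Hilbert space with dense subspace $\mathcal D$, $n\in\mathbb N$. Operators written $X,X^\dagger$ on a common domain $V$ satisfy $\langle u,Xv\rangle=\langle X^\dagger u,v\rangle$ for $u,v\in V$. For each $k\in\mathbb N$ there are operators $K^{(k)},L^{(k)}_i,M^{(k)}_i,N^{(k)}_{ij}$ ($1\le i,j\le n$) which, together with their $\dagger$'s, have common invariant domain $\mathcal D$ and satisfy on $\mathcal D$ (Condition 1): $K^{(k)}+K^{(k)\dagger}=-\sum_iL^{(k)}_iL^{(k)\dagger}_i$, $M^{(k)}_i=-\sum_jN^{(k)}_{ij}L^{(k)\dagger}_j$, $\sum_jN^{(k)}_{mj}N^{(k)\dagger}_{\ell j}=\sum_jN^{(k)\dagger}_{jm}N^{(k)}_{j\ell}=\delta_{m\ell}$. Assumption 1 (singular scaling): there are operators $Y,Y^\dagger,A,A^\dagger,B,B^\dagger,F_i,F_i^\dagger,G_i,G_i^\dagger,W_{ij},W_{ij}^\dagger$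 with common invariant domain $\mathcal D$ such that $K^{(k)}=k^2Y+kA+B$, $L^{(k)}_i=kF_i+G_i$, $N^{(k)}_{ij}=W_{ij}$ for all $k$ and $i,j$. Assumption 2 (structure): there is a closed subspace $\mathcal H_0\subset\mathcal H$, with $P_0$ the orthogonal projection onto $\mathcal H_0$ and $P_1=I-P_0$, such that (a) $P_0\mathcal D\subset\mathcal D$; (b) $YP_0=0$ on $\mathcal D$; (c) there exist $\tilde Y,\tilde Y^\dagger$ with common invariant domain $\mathcal D$ with $\tilde YY=Y\tilde Y=P_1$ on $\mathcal D$; (d) $F_j^\dagger P_0=0$ on $\mathcal D$ for all $j$; (e) $P_0AP_0=0$ on $\mathcal D$. Set $\mathcal D_0=P_0\mathcal D$. Assumption 3 (limit coefficients): define on $\mathcal H_0$: $K=P_0(B-A\tilde YA)P_0$, $L_i=P_0(G_i-A\tilde YF_i)P_0$, $M_i=-\sum_jP_0W_{ij}(G_j^\dagger-F_j^\dagger\tilde YA)P_0$, $N_{ij}=\sum_\ell P_0W_{i\ell}(F_\ell^\dagger\tilde YF_j+\delta_{\ell j})P_0$; it is assumed that $K,K^\dagger,L_i,L_i^\dagger,M_i,M_i^\dagger,N_{ij},N_{ij}^\dagger$ have common invariant domain $\mathcal D_0$, and that on $\mathcal D$, for all $i,j$: $P_0(G_i-A\tilde YF_i)P_1=0$, $\sum_\ell P_0W_{i\ell}(F_\ell^\dagger\tilde YF_j+\delta_{\ell j})P_1=0$, and $\sum_\ell P_1W_{i\ell}(F_\ell^\dagger\tilde YF_j+\delta_{\ell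 j})P_0=0$. *)

theory Defs
  imports "HOL-Analysis.Analysis"
begin

text \<open>HOL-Analysis only provides real inner product spaces, so we
introduce a class of complex inner product spaces compatible with the library's real normed
(and complete) structure: complex scalar multiplication extends real scalar multiplication,
the inner product is conjugate-linear in the first and linear in the second argument, and
the library norm is the norm induced by the inner product.\<close>

class chilbert = real_normed_vector + complete_space +
  fixes scaleC :: "complex \<Rightarrow> 'a \<Rightarrow> 'a" (infixr "*\<^sub>C" 75)
    and cinner :: "'a \<Rightarrow> 'a \<Rightarrow> complex"
  assumes scaleC_add_right: "a *\<^sub>C (x + y) = a *\<^sub>C x + a *\<^sub>C y"
    and scaleC_add_left: "(a + b) *\<^sub>C x = a *\<^sub>C x + b *\<^sub>C x"
    and scaleC_scaleC: "a *\<^sub>C (b *\<^sub>C x) = (a * b) *\<^sub>C x"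
    and scaleC_one: "1 *\<^sub>C x = x"
    and scaleR_scaleC: "scaleR r x = complex_of_real r *\<^sub>C x"
    and cinner_add_right: "cinner x (y + z) = cinner x y + cinner x z"
    and cinner_scaleC_right: "cinner x (a *\<^sub>C y) = a * cinner x y"
    and cinner_commute: "cinner y x = cnj (cinner x y)"
    and cinner_self_norm: "cinner x x = complex_of_real ((norm x)\<^sup>2)"

definition csubspace :: "'a::chilbert set \<Rightarrow> bool" where
  "csubspace S \<longleftrightarrow> 0 \<in> S \<and> (\<forall>x\<in>S. \<forall>y\<in>S. x + y \<in> S) \<and> (\<forall>c. \<forall>x\<in>S. c *\<^sub>C x \<in> S)"

definition separable_hilbert :: "'a::chilbert itself \<Rightarrow> bool" where
  "separable_hilbert _ \<longleftrightarrow> (\<exists>C::'a set. countable C \<and> closure C = UNIV)"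

definition common_inv_dom :: "'a::chilbert set \<Rightarrow> ('a \<Rightarrow> 'a) \<Rightarrow> ('a \<Rightarrow> 'a) \<Rightarrow> bool" where
  "common_inv_dom V X Xd \<longleftrightarrow> X ` V \<subseteq> V \<and> Xd ` V \<subseteq> V \<and>
     (\<forall>u\<in>V. \<forall>v\<in>V. cinner u (X v) = cinner (Xd u) v)"

definition is_orth_proj :: "'a::chilbert set \<Rightarrow> ('a \<Rightarrow> 'a) \<Rightarrow> bool" where
  "is_orth_proj H0 P \<longleftrightarrow> (\<forall>x. P x \<in> H0 \<and> (\<forall>h\<in>H0. cinner h (x - P x) = 0))"

definition kdelta :: "nat \<Rightarrow> nat \<Rightarrow> 'a::chilbert \<Rightarrow> 'a" where
  "kdelta m l v = (if m = l then v else 0)"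

text \<open>Limit coefficients of Assumption 3 (operators on H0; P0 = projection, Yt = tilde Y).\<close>
definition limK :: "('a::chilbert \<Rightarrow> 'a) \<Rightarrow> ('a \<Rightarrow> 'a) \<Rightarrow> ('a \<Rightarrow> 'a) \<Rightarrow> ('a \<Rightarrow> 'a) \<Rightarrow> 'a \<Rightarrow> 'a" where
  "limK P0 A B Yt v = P0 (B (P0 v) - A (Yt (A (P0 v))))"

definition limL :: "('a::chilbert \<Rightarrow> 'a) \<Rightarrow> ('a \<Rightarrow> 'a) \<Rightarrow> (nat \<Rightarrow> 'a \<Rightarrow> 'a) \<Rightarrow> (nat \<Rightarrow> 'a \<Rightarrow> 'a)
    \<Rightarrow> ('a \<Rightarrow> 'a) \<Rightarrow> nat \<Rightarrow> 'a \<Rightarrow> 'a" where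
  "limL P0 A F G Yt i v = P0 (G i (P0 v) - A (Yt (F i (P0 v))))"

definition limM :: "nat \<Rightarrow> ('a::chilbert \<Rightarrow> 'a) \<Rightarrow> ('a \<Rightarrow> 'a) \<Rightarrow> (nat \<Rightarrow> 'a \<Rightarrow> 'a)
    \<Rightarrow> (nat \<Rightarrow> 'a \<Rightarrow> 'a) \<Rightarrow> (nat \<Rightarrow> nat \<Rightarrow> 'a \<Rightarrow> 'a) \<Rightarrow> ('a \<Rightarrow> 'a) \<Rightarrow> nat \<Rightarrow> 'a \<Rightarrow> 'a" where
  "limM n P0 A Fd Gd W Yt i v =
     - (\<Sum>j = 1..n. P0 (W i j (Gd j (P0 v) - Fd j (Yt (A (P0 v))))))"

definition limN :: "nat \<Rightarrow> ('a::chilbert \<Rightarrow> 'a) \<Rightarrow> (nat \<Rightarrow> 'a \<Rightarrow> 'a) \<Rightarrow> (nat \<Rightarrow> 'a \<Rightarrow> 'a)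
    \<Rightarrow> (nat \<Rightarrow> nat \<Rightarrow> 'a \<Rightarrow> 'a) \<Rightarrow> ('a \<Rightarrow> 'a) \<Rightarrow> nat \<Rightarrow> nat \<Rightarrow> 'a \<Rightarrow> 'a" where
  "limN n P0 F Fd W Yt i j v =
     (\<Sum>l = 1..n. P0 (W i l (Fd l (Yt (F j (P0 v))) + kdelta l j (P0 v))))"

end

theory Submission
  imports Defs
begin


context chilbert begin
lemma cinner_scaleR_right: "cinner x (r *\<^sub>R y) = complex_of_real r * cinner x y"
  by (simp add: scaleR_scaleC cinner_scaleC_right)
lemma cinner_zero_right[simp]: "cinner x 0 = 0"
proof -
  have "cinner x (0+0) = cinner x 0 + cinner x 0" by (rule cinner_add_right)
  then show ?thesis by simp
qed
end
lemma cinner_minus_right: "cinner (x::'a::chilbert) (- y) = - cinner x y"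
proof -
  have "cinner x (y + - y) = cinner x y + cinner x (-y)" by (rule cinner_add_right)
  then have "cinner x y + cinner x (-y) = 0" by simp
  then show ?thesis using minus_unique[of "cinner x y" "cinner x (-y)"] by simp
qed
lemma cinner_diff_right: "cinner x (y - z) = cinner x y - cinner x z"
  using cinner_add_right[of x y "-z"] cinner_minus_right[of x z] by simp
lemma cinner_sum_right: "cinner x (sum f S) = (\<Sum>i\<in>S. cinner x (f i))"
  by (induction S rule: infinite_finite_induct) (auto simp: cinner_add_right)
lemma cinner_add_left: "cinner (x + y) z = cinner x z + cinner y z"
  by (metis cinner_add_right cinner_commute complex_cnj_add)
lemma cinner_zero_left[simp]: "cinner 0 x = 0"
  by (metis cinner_commute cinner_zero_right complex_cnj_zero)
lemma cinner_diff_left: "cinner (x - y) z = cinner x z - cinner y z"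
  by (metis cinner_commute cinner_diff_right complex_cnj_diff)
lemma cinner_self_zero: "cinner (x::'a::chilbert) x = 0 \<Longrightarrow> x = 0"
  by (simp add: cinner_self_norm)

lemma csub_0: "csubspace V \<Longrightarrow> 0 \<in> V" by (simp add: csubspace_def)
lemma csub_add: "csubspace V \<Longrightarrow> x \<in> V \<Longrightarrow> y \<in> V \<Longrightarrow> x + y \<in> V" by (simp add: csubspace_def)
lemma csub_scaleR: "csubspace V \<Longrightarrow> x \<in> V \<Longrightarrow> r *\<^sub>R x \<in> V" by (simp add: csubspace_def scaleR_scaleC)
lemma csub_neg: "csubspace V \<Longrightarrow> x \<in> V \<Longrightarrow> - x \<in> V" using csub_scaleR[of V x "-1"] by simp
lemma csub_diff: "csubspace V \<Longrightarrow> x \<in> V \<Longrightarrow> y \<in> V \<Longrightarrow> x - y \<in> V"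
  using csub_add[of V x "-y"] csub_neg[of V y] by simp
lemma csub_sum: "csubspace V \<Longrightarrow> (\<And>i. i \<in> S \<Longrightarrow> f i \<in> V) \<Longrightarrow> sum f S \<in> V"
  by (induction S rule: infinite_finite_induct) (auto simp: csub_0 csub_add)

lemma vec_eq_by_cinner:
  assumes "csubspace V" "a \<in> V" "b \<in> V" "\<And>u. u \<in> V \<Longrightarrow> cinner u a = cinner u b"
  shows "a = b"
proof -
  have "a - b \<in> V" using assms csub_diff by blast
  then have "cinner (a - b) (a - b) = 0" using assms(4) by (simp add: cinner_diff_right)
  then show ?thesis using cinner_self_zero[of "a - b"] by simp
qed

lemma cid_mem: "common_inv_dom V X Xd \<Longrightarrow> x \<in> V \<Longrightarrow> X x \<in> V"
  by (auto simp: common_inv_dom_def)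
lemma cid_memd: "common_inv_dom V X Xd \<Longrightarrow> x \<in> V \<Longrightarrow> Xd x \<in> V"
  by (auto simp: common_inv_dom_def)
lemma cid_adj: "common_inv_dom V X Xd \<Longrightarrow> u \<in> V \<Longrightarrow> v \<in> V \<Longrightarrow> cinner u (X v) = cinner (Xd u) v"
  by (auto simp: common_inv_dom_def)
lemma cid_sym: "common_inv_dom V X Xd \<Longrightarrow> common_inv_dom V Xd X"
  unfolding common_inv_dom_def by (metis cinner_commute)

lemma cid_add:
  assumes "csubspace V" "common_inv_dom V X Xd" "x \<in> V" "y \<in> V"
  shows "X (x + y) = X x + X y"
  by (rule vec_eq_by_cinner[OF assms(1)])
     (use assms in \<open>auto simp: cid_mem csub_add cid_adj cinner_add_right cid_memd\<close>)
lemma cid_scaleR: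
  assumes "csubspace V" "common_inv_dom V X Xd" "x \<in> V"
  shows "X (r *\<^sub>R x) = r *\<^sub>R X x"
  by (rule vec_eq_by_cinner[OF assms(1)])
     (use assms in \<open>auto simp: cid_mem csub_scaleR cid_adj cinner_scaleR_right cid_memd\<close>)
lemma cid_neg:
  assumes "csubspace V" "common_inv_dom V X Xd" "x \<in> V"
  shows "X (- x) = - X x"
  using cid_scaleR[OF assms, of "-1"] by simp
lemma cid_diff:
  assumes "csubspace V" "common_inv_dom V X Xd" "x \<in> V" "y \<in> V"
  shows "X (x - y) = X x - X y"
  using cid_add[OF assms(1,2,3), of "-y"] cid_neg[OF assms(1,2,4)] assms csub_neg by auto
lemma cid_zero:
  assumes "csubspace V" "common_inv_dom V X Xd"
  shows "X 0 = 0"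
  using cid_scaleR[OF assms csub_0[OF assms(1)], of 0] by simp
lemma cid_sum:
  assumes "csubspace V" "common_inv_dom V X Xd" "\<And>i. i \<in> S \<Longrightarrow> f i \<in> V"
  shows "X (sum f S) = (\<Sum>i\<in>S. X (f i))"
  using assms(3)
proof (induction S rule: infinite_finite_induct)
  case (infinite A) then show ?case using cid_zero[OF assms(1,2)] by simp
next
  case empty then show ?case using cid_zero[OF assms(1,2)] by simp
next
  case (insert x F)
  have "sum f F \<in> V" by (rule csub_sum[OF assms(1)]) (use insert.prems in blast)
  then show ?case using insert cid_add[OF assms(1,2)] by simp
qed

lemma proj_char:
  assumes "csubspace H" "is_orth_proj H P" "p \<in> H" "\<And>h. h \<in> H \<Longrightarrow> cinner h (z - p) = 0"
  shows "P z = p"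
proof -
  have m: "P z - p \<in> H" using assms csub_diff unfolding is_orth_proj_def by blast
  have "cinner (P z - p) (z - p) = 0" using assms(4) m by blast
  moreover have "cinner (P z - p) (z - P z) = 0" using assms(2) m unfolding is_orth_proj_def by blast
  ultimately have "cinner (P z - p) (P z - p) = 0"
    by (metis (no_types, lifting) cinner_diff_right diff_diff_eq2 diff_self diff_zero
        add_diff_cancel_left' diff_add_cancel)
  then show ?thesis using cinner_self_zero[of "P z - p"] by simp
qed
lemma proj_in: "is_orth_proj H P \<Longrightarrow> P x \<in> H" by (simp add: is_orth_proj_def)
lemma proj_orth: "is_orth_proj H P \<Longrightarrow> h \<in> H \<Longrightarrow> cinner h (x - P x) = 0" by (simp add: is_orth_proj_def)
lemma proj_id: "csubspace H \<Longrightarrow> is_orth_proj H P \<Longrightarrow> h \<in> H \<Longrightarrow> P h = h"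
  by (rule proj_char) auto
lemma proj_add: assumes "csubspace H" "is_orth_proj H P" shows "P (x + y) = P x + P y"
proof (rule proj_char[OF assms])
  show "P x + P y \<in> H" using assms proj_in csub_add by blast
  fix h assume h: "h \<in> H"
  have e: "x + y - (P x + P y) = (x - P x) + (y - P y)" by simp
  show "cinner h (x + y - (P x + P y)) = 0"
    unfolding e using proj_orth[OF assms(2) h] by (simp add: cinner_add_right)
qed
lemma proj_scaleR: assumes "csubspace H" "is_orth_proj H P" shows "P (r *\<^sub>R x) = r *\<^sub>R P x"
proof (rule proj_char[OF assms])
  show "r *\<^sub>R P x \<in> H" using assms proj_in csub_scaleR by blast
  fix h assume h: "h \<in> H"
  have e: "r *\<^sub>R x - r *\<^sub>R P x = r *\<^sub>R (x - P x)" by (simp add: scaleR_diff_right)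
  show "cinner h (r *\<^sub>R x - r *\<^sub>R P x) = 0"
    unfolding e using proj_orth[OF assms(2) h] by (simp add: cinner_scaleR_right)
qed
lemma proj_neg: assumes "csubspace H" "is_orth_proj H P" shows "P (- x) = - P x"
  using proj_scaleR[OF assms, of "-1"] by simp
lemma proj_diff: assumes "csubspace H" "is_orth_proj H P" shows "P (x - y) = P x - P y"
  using proj_add[OF assms, of x "-y"] proj_neg[OF assms] by simp
lemma proj_zero: assumes "csubspace H" "is_orth_proj H P" shows "P 0 = 0"
  using proj_scaleR[OF assms, of 0] by simp
lemma proj_sum: assumes "csubspace H" "is_orth_proj H P" shows "P (sum f S) = (\<Sum>i\<in>S. P (f i))"
  by (induction S rule: infinite_finite_induct) (auto simp: proj_add[OF assms] proj_zero[OF assms])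
lemma proj_idem: "csubspace H \<Longrightarrow> is_orth_proj H P \<Longrightarrow> P (P x) = P x"
  using proj_id proj_in by blast
lemma proj_selfadj: assumes "csubspace H" "is_orth_proj H P" shows "cinner x (P y) = cinner (P x) y"
proof -
  have a: "cinner (P x) (y - P y) = 0" "cinner (P y) (x - P x) = 0"
    using assms proj_in proj_orth by blast+
  have "cinner (P x) y = cinner (P x) (P y)" using a(1) by (simp add: cinner_diff_right)
  moreover have "cinner (P y) x = cinner (P y) (P x)" using a(2) by (simp add: cinner_diff_right)
  ultimately show ?thesis by (metis cinner_commute)
qed

lemma cinner_scaleR_left: "cinner (r *\<^sub>R x) (y::'a::chilbert) = complex_of_real r * cinner x y"
  by (metis cinner_commute cinner_scaleR_right complex_cnj_mult complex_cnj_complex_of_real)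
lemma cinner_minus_left: "cinner (- x) (y::'a::chilbert) = - cinner x y"
  by (metis cinner_commute cinner_minus_right complex_cnj_minus)
lemma cinner_sum_left: "cinner (sum f S) (y::'a::chilbert) = (\<Sum>i\<in>S. cinner (f i) y)"
  by (induction S rule: infinite_finite_induct) (auto simp: cinner_add_left)
lemma proj_scaleC: assumes "csubspace H" "is_orth_proj H P" shows "P (c *\<^sub>C x) = c *\<^sub>C P x"
proof (rule proj_char[OF assms])
  show "c *\<^sub>C P x \<in> H" using assms proj_in unfolding csubspace_def by blast
  fix h assume h: "h \<in> H"
  have "cinner h (c *\<^sub>C x - c *\<^sub>C P x) = cinner h (c *\<^sub>C x) - cinner h (c *\<^sub>C P x)"
    by (rule cinner_diff_right)
  also have "\<dots> = c * cinner h (x - P x)" by (simp add: cinner_scaleC_right cinner_diff_right algebra_simps)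
  also have "\<dots> = 0" using proj_orth[OF assms(2) h] by simp
  finally show "cinner h (c *\<^sub>C x - c *\<^sub>C P x) = 0" .
qed
lemma csub_proj_image:
  assumes "csubspace H" "is_orth_proj H P" "csubspace V"
  shows "csubspace (P ` V)"
  unfolding csubspace_def
proof (intro conjI ballI allI)
  show "0 \<in> P ` V" using proj_zero[OF assms(1,2)] csub_0[OF assms(3)] by (metis image_eqI)
next
  fix x y assume "x \<in> P ` V" "y \<in> P ` V"
  then obtain a b where "a \<in> V" "b \<in> V" "x = P a" "y = P b" by blast
  then show "x + y \<in> P ` V" using proj_add[OF assms(1,2)] csub_add[OF assms(3)] by (metis image_eqI)
next
  fix c x assume "x \<in> P ` V"
  then obtain a where "a \<in> V" "x = P a" by blast
  then show "c *\<^sub>C x \<in> P ` V" using proj_scaleC[OF assms(1,2)] assms(3) unfolding csubspace_def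
    by (metis image_eqI)
qed

lemma poly3c:
  fixes al be ga :: complex
  assumes "al + be + ga = 0" "4*al + 2*be + ga = 0" "9*al + 3*be + ga = 0"
  shows "al = 0 \<and> be = 0 \<and> ga = 0"
proof -
  have "2*al = (9*al + 3*be + ga) - 2*(4*al + 2*be + ga) + (al + be + ga)" by (simp add: algebra_simps)
  then have a: "al = 0" using assms by simp
  have h: "2*be = 8*(4*al + 2*be + ga) - 3*(9*al + 3*be + ga) - 5*(al + be + ga)" by (simp add: algebra_simps)
  have "2*be = 0" by (subst h, simp only: assms, simp)
  then have b: "be = 0" by simp
  show ?thesis using a b assms(1) by simp
qed

lemma poly3:
  fixes a b c :: "'a::chilbert"
  assumes "\<And>k::nat. k \<ge> 1 \<Longrightarrow> (real k)\<^sup>2 *\<^sub>R a + real k *\<^sub>R b + c = 0"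
  shows "a = 0 \<and> b = 0 \<and> c = 0"
proof -
  have key: "cinner u a = 0 \<and> cinner u b = 0 \<and> cinner u c = 0" for u
  proof (rule poly3c)
    have "cinner u ((real k)\<^sup>2 *\<^sub>R a + real k *\<^sub>R b + c) = 0" if "k \<ge> 1" for k
      using assms[OF that] by simp
    then have e: "complex_of_real ((real k)\<^sup>2) * cinner u a + complex_of_real (real k) * cinner u b + cinner u c = 0"
      if "k \<ge> 1" for k
      using that by (simp add: cinner_add_right cinner_scaleR_right)
    show "cinner u a + cinner u b + cinner u c = 0" using e[of 1] by simp
    show "4 * cinner u a + 2 * cinner u b + cinner u c = 0" using e[of 2] by (simp add: power2_eq_square)
    show "9 * cinner u a + 3 * cinner u b + cinner u c = 0" using e[of 3] by (simp add: power2_eq_square)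
  qed
  show ?thesis using key[of a] key[of b] key[of c] cinner_self_zero by blast
qed




theorem lemma2:
  fixes D H0 :: "'a::chilbert set" and n :: nat
    and Kk Kkd :: "nat \<Rightarrow> 'a \<Rightarrow> 'a"
    and Lk Lkd Mk Mkd :: "nat \<Rightarrow> nat \<Rightarrow> 'a \<Rightarrow> 'a"
    and Nk Nkd :: "nat \<Rightarrow> nat \<Rightarrow> nat \<Rightarrow> 'a \<Rightarrow> 'a"
    and Y Yd A Ad B Bd Yt Ytd P0 P1 :: "'a \<Rightarrow> 'a"
    and F Fd G Gd :: "nat \<Rightarrow> 'a \<Rightarrow> 'a"
    and W Wd :: "nat \<Rightarrow> nat \<Rightarrow> 'a \<Rightarrow> 'a"
    and Kd :: "'a \<Rightarrow> 'a"
    and Ld Md :: "nat \<Rightarrow> 'a \<Rightarrow> 'a"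
    and Nd :: "nat \<Rightarrow> nat \<Rightarrow> 'a \<Rightarrow> 'a"
  assumes separable: "separable_hilbert TYPE('a)"
    and D_subspace: "csubspace D"
    and D_dense: "closure D = UNIV"
    \<comment> \<open>prelimit coefficients and their daggers have common invariant domain D (k \<in> \<nat> = {1,2,...})\<close>
    and dom_Kk: "\<And>k. k \<ge> 1 \<Longrightarrow> common_inv_dom D (Kk k) (Kkd k)"
    and dom_Lk: "\<And>k i. k \<ge> 1 \<Longrightarrow> i \<in> {1..n} \<Longrightarrow> common_inv_dom D (Lk k i) (Lkd k i)"
    and dom_Mk: "\<And>k i. k \<ge> 1 \<Longrightarrow> i \<in> {1..n} \<Longrightarrow> common_inv_dom D (Mk k i) (Mkd k i)"
    and dom_Nk: "\<And>k i j. k \<ge> 1 \<Longrightarrow> i \<in> {1..n} \<Longrightarrow> j \<in> {1..n} \<Longrightarrow>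
                   common_inv_dom D (Nk k i j) (Nkd k i j)"
    \<comment> \<open>Condition 1 (Hudson--Parthasarathy conditions on D)\<close>
    and HP_K: "\<And>k v. k \<ge> 1 \<Longrightarrow> v \<in> D \<Longrightarrow>
                 Kk k v + Kkd k v = - (\<Sum>i = 1..n. Lk k i (Lkd k i v))"
    and HP_M: "\<And>k i v. k \<ge> 1 \<Longrightarrow> i \<in> {1..n} \<Longrightarrow> v \<in> D \<Longrightarrow>
                 Mk k i v = - (\<Sum>j = 1..n. Nk k i j (Lkd k j v))"
    and HP_N1: "\<And>k m l v. k \<ge> 1 \<Longrightarrow> m \<in> {1..n} \<Longrightarrow> l \<in> {1..n} \<Longrightarrow> v \<in> D \<Longrightarrow>
                 (\<Sum>j = 1..n. Nk k m j (Nkd k l j v)) = kdelta m l v"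
    and HP_N2: "\<And>k m l v. k \<ge> 1 \<Longrightarrow> m \<in> {1..n} \<Longrightarrow> l \<in> {1..n} \<Longrightarrow> v \<in> D \<Longrightarrow>
                 (\<Sum>j = 1..n. Nkd k j m (Nk k j l v)) = kdelta m l v"
    \<comment> \<open>Assumption 1 (singular scaling)\<close>
    and dom_Y: "common_inv_dom D Y Yd"
    and dom_A: "common_inv_dom D A Ad"
    and dom_B: "common_inv_dom D B Bd"
    and dom_F: "\<And>i. i \<in> {1..n} \<Longrightarrow> common_inv_dom D (F i) (Fd i)"
    and dom_G: "\<And>i. i \<in> {1..n} \<Longrightarrow> common_inv_dom D (G i) (Gd i)"
    and dom_W: "\<And>i j. i \<in> {1..n} \<Longrightarrow> j \<in> {1..n} \<Longrightarrow> common_inv_dom D (W i j) (Wd i j)"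
    and scal_K: "\<And>k v. k \<ge> 1 \<Longrightarrow> v \<in> D \<Longrightarrow>
                   Kk k v = (of_nat k)\<^sup>2 *\<^sub>C Y v + of_nat k *\<^sub>C A v + B v"
    and scal_L: "\<And>k i v. k \<ge> 1 \<Longrightarrow> i \<in> {1..n} \<Longrightarrow> v \<in> D \<Longrightarrow>
                   Lk k i v = of_nat k *\<^sub>C F i v + G i v"
    and scal_N: "\<And>k i j v. k \<ge> 1 \<Longrightarrow> i \<in> {1..n} \<Longrightarrow> j \<in> {1..n} \<Longrightarrow> v \<in> D \<Longrightarrow>
                   Nk k i j v = W i j v"
    \<comment> \<open>Assumption 2 (structure)\<close>
    and H0_closed: "closed H0"
    and H0_subspace: "csubspace H0"
    and P0_proj: "is_orth_proj H0 P0"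
    and P1_def: "\<And>x. P1 x = x - P0 x"
    and A2a: "P0 ` D \<subseteq> D"
    and A2b: "\<And>v. v \<in> D \<Longrightarrow> Y (P0 v) = 0"
    and A2c_dom: "common_inv_dom D Yt Ytd"
    and A2c: "\<And>v. v \<in> D \<Longrightarrow> Yt (Y v) = P1 v \<and> Y (Yt v) = P1 v"
    and A2d: "\<And>j v. j \<in> {1..n} \<Longrightarrow> v \<in> D \<Longrightarrow> Fd j (P0 v) = 0"
    and A2e: "\<And>v. v \<in> D \<Longrightarrow> P0 (A (P0 v)) = 0"
    \<comment> \<open>Assumption 3 (limit coefficients), with D0 = P0 ` D\<close>
    and dom_K0: "common_inv_dom (P0 ` D) (limK P0 A B Yt) Kd"
    and dom_L0: "\<And>i. i \<in> {1..n} \<Longrightarrow> common_inv_dom (P0 ` D) (limL P0 A F G Yt i) (Ld i)"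
    and dom_M0: "\<And>i. i \<in> {1..n} \<Longrightarrow> common_inv_dom (P0 ` D) (limM n P0 A Fd Gd W Yt i) (Md i)"
    and dom_N0: "\<And>i j. i \<in> {1..n} \<Longrightarrow> j \<in> {1..n} \<Longrightarrow>
                   common_inv_dom (P0 ` D) (limN n P0 F Fd W Yt i j) (Nd i j)"
    and A3a: "\<And>i v. i \<in> {1..n} \<Longrightarrow> v \<in> D \<Longrightarrow>
                P0 (G i (P1 v) - A (Yt (F i (P1 v)))) = 0"
    and A3b: "\<And>i j v. i \<in> {1..n} \<Longrightarrow> j \<in> {1..n} \<Longrightarrow> v \<in> D \<Longrightarrow>
                (\<Sum>l = 1..n. P0 (W i l (Fd l (Yt (F j (P1 v))) + kdelta l j (P1 v)))) = 0"
    and A3c: "\<And>i j v. i \<in> {1..n} \<Longrightarrow> j \<in> {1..n} \<Longrightarrow> v \<in> D \<Longrightarrow>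
                (\<Sum>l = 1..n. P1 (W i l (Fd l (Yt (F j (P0 v))) + kdelta l j (P0 v)))) = 0"
  shows "(\<forall>v \<in> P0 ` D. limK P0 A B Yt v + Kd v = - (\<Sum>i = 1..n. limL P0 A F G Yt i (Ld i v)))
       \<and> (\<forall>i \<in> {1..n}. \<forall>v \<in> P0 ` D.
            limM n P0 A Fd Gd W Yt i v = - (\<Sum>j = 1..n. limN n P0 F Fd W Yt i j (Ld j v)))
       \<and> (\<forall>m \<in> {1..n}. \<forall>l \<in> {1..n}. \<forall>v \<in> P0 ` D.
            (\<Sum>j = 1..n. limN n P0 F Fd W Yt m j (Nd l j v)) = kdelta m l v
          \<and> (\<Sum>j = 1..n. Nd j m (limN n P0 F Fd W Yt j l v)) = kdelta m l v)"
proof -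
  have Dsub: "csubspace D" by (rule D_subspace)
  note HP = H0_subspace P0_proj
  have Y_add: "Y (x + y) = Y x + Y y" if "x \<in> D" "y \<in> D" for  x y
    using cid_add[OF Dsub dom_Y that(1) that(2)] .
  have Y_diff: "Y (x - y) = Y x - Y y" if "x \<in> D" "y \<in> D" for  x y
    using cid_diff[OF Dsub dom_Y that(1) that(2)] .
  have Y_neg: "Y (- x) = - Y x" if "x \<in> D" for  x
    using cid_neg[OF Dsub dom_Y that(1)] .
  have Y_sc: "Y (r *\<^sub>R x) = r *\<^sub>R Y x" if "x \<in> D" for  r x
    using cid_scaleR[OF Dsub dom_Y that(1)] .
  have Y_zero: "Y 0 = 0"
    using cid_zero[OF Dsub dom_Y] .
  have Y_sum: "Y (sum f S) = (\<Sum>k\<in>S. Y (f k))" if "\<forall>k\<in>S. f k \<in> D" for f :: "nat \<Rightarrow> 'a" and S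
    using cid_sum[OF Dsub dom_Y, of S f] that by blast
  have Y_mem: "Y x \<in> D" if "x \<in> D" for  x
    using cid_mem[OF dom_Y that(1)] .
  have Y_adj: "cinner (Y a) b = cinner a (Yd b)" if "a \<in> D" "b \<in> D" for  a b
    using cid_adj[OF cid_sym[OF dom_Y] that(1) that(2), symmetric] .
  have Yd_add: "Yd (x + y) = Yd x + Yd y" if "x \<in> D" "y \<in> D" for  x y
    using cid_add[OF Dsub cid_sym[OF dom_Y] that(1) that(2)] .
  have Yd_diff: "Yd (x - y) = Yd x - Yd y" if "x \<in> D" "y \<in> D" for  x y
    using cid_diff[OF Dsub cid_sym[OF dom_Y] that(1) that(2)] .
  have Yd_neg: "Yd (- x) = - Yd x" if "x \<in> D" for  x
    using cid_neg[OF Dsub cid_sym[OF dom_Y] that(1)] .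
  have Yd_sc: "Yd (r *\<^sub>R x) = r *\<^sub>R Yd x" if "x \<in> D" for  r x
    using cid_scaleR[OF Dsub cid_sym[OF dom_Y] that(1)] .
  have Yd_zero: "Yd 0 = 0"
    using cid_zero[OF Dsub cid_sym[OF dom_Y]] .
  have Yd_sum: "Yd (sum f S) = (\<Sum>k\<in>S. Yd (f k))" if "\<forall>k\<in>S. f k \<in> D" for f :: "nat \<Rightarrow> 'a" and S
    using cid_sum[OF Dsub cid_sym[OF dom_Y], of S f] that by blast
  have Yd_mem: "Yd x \<in> D" if "x \<in> D" for  x
    using cid_mem[OF cid_sym[OF dom_Y] that(1)] .
  have Yd_adj: "cinner (Yd a) b = cinner a (Y b)" if "a \<in> D" "b \<in> D" for  a b
    using cid_adj[OF cid_sym[OF cid_sym[OF dom_Y]] that(1) that(2), symmetric] .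
  have A_add: "A (x + y) = A x + A y" if "x \<in> D" "y \<in> D" for  x y
    using cid_add[OF Dsub dom_A that(1) that(2)] .
  have A_diff: "A (x - y) = A x - A y" if "x \<in> D" "y \<in> D" for  x y
    using cid_diff[OF Dsub dom_A that(1) that(2)] .
  have A_neg: "A (- x) = - A x" if "x \<in> D" for  x
    using cid_neg[OF Dsub dom_A that(1)] .
  have A_sc: "A (r *\<^sub>R x) = r *\<^sub>R A x" if "x \<in> D" for  r x
    using cid_scaleR[OF Dsub dom_A that(1)] .
  have A_zero: "A 0 = 0"
    using cid_zero[OF Dsub dom_A] .
  have A_sum: "A (sum f S) = (\<Sum>k\<in>S. A (f k))" if "\<forall>k\<in>S. f k \<in> D" for f :: "nat \<Rightarrow> 'a" and S
    using cid_sum[OF Dsub dom_A, of S f] that by blast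
  have A_mem: "A x \<in> D" if "x \<in> D" for  x
    using cid_mem[OF dom_A that(1)] .
  have A_adj: "cinner (A a) b = cinner a (Ad b)" if "a \<in> D" "b \<in> D" for  a b
    using cid_adj[OF cid_sym[OF dom_A] that(1) that(2), symmetric] .
  have Ad_add: "Ad (x + y) = Ad x + Ad y" if "x \<in> D" "y \<in> D" for  x y
    using cid_add[OF Dsub cid_sym[OF dom_A] that(1) that(2)] .
  have Ad_diff: "Ad (x - y) = Ad x - Ad y" if "x \<in> D" "y \<in> D" for  x y
    using cid_diff[OF Dsub cid_sym[OF dom_A] that(1) that(2)] .
  have Ad_neg: "Ad (- x) = - Ad x" if "x \<in> D" for  x
    using cid_neg[OF Dsub cid_sym[OF dom_A] that(1)] .
  have Ad_sc: "Ad (r *\<^sub>R x) = r *\<^sub>R Ad x" if "x \<in> D" for  r x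
    using cid_scaleR[OF Dsub cid_sym[OF dom_A] that(1)] .
  have Ad_zero: "Ad 0 = 0"
    using cid_zero[OF Dsub cid_sym[OF dom_A]] .
  have Ad_sum: "Ad (sum f S) = (\<Sum>k\<in>S. Ad (f k))" if "\<forall>k\<in>S. f k \<in> D" for f :: "nat \<Rightarrow> 'a" and S
    using cid_sum[OF Dsub cid_sym[OF dom_A], of S f] that by blast
  have Ad_mem: "Ad x \<in> D" if "x \<in> D" for  x
    using cid_mem[OF cid_sym[OF dom_A] that(1)] .
  have Ad_adj: "cinner (Ad a) b = cinner a (A b)" if "a \<in> D" "b \<in> D" for  a b
    using cid_adj[OF cid_sym[OF cid_sym[OF dom_A]] that(1) that(2), symmetric] .
  have B_add: "B (x + y) = B x + B y" if "x \<in> D" "y \<in> D" for  x y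
    using cid_add[OF Dsub dom_B that(1) that(2)] .
  have B_diff: "B (x - y) = B x - B y" if "x \<in> D" "y \<in> D" for  x y
    using cid_diff[OF Dsub dom_B that(1) that(2)] .
  have B_neg: "B (- x) = - B x" if "x \<in> D" for  x
    using cid_neg[OF Dsub dom_B that(1)] .
  have B_sc: "B (r *\<^sub>R x) = r *\<^sub>R B x" if "x \<in> D" for  r x
    using cid_scaleR[OF Dsub dom_B that(1)] .
  have B_zero: "B 0 = 0"
    using cid_zero[OF Dsub dom_B] .
  have B_sum: "B (sum f S) = (\<Sum>k\<in>S. B (f k))" if "\<forall>k\<in>S. f k \<in> D" for f :: "nat \<Rightarrow> 'a" and S
    using cid_sum[OF Dsub dom_B, of S f] that by blast
  have B_mem: "B x \<in> D" if "x \<in> D" for  x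
    using cid_mem[OF dom_B that(1)] .
  have B_adj: "cinner (B a) b = cinner a (Bd b)" if "a \<in> D" "b \<in> D" for  a b
    using cid_adj[OF cid_sym[OF dom_B] that(1) that(2), symmetric] .
  have Bd_add: "Bd (x + y) = Bd x + Bd y" if "x \<in> D" "y \<in> D" for  x y
    using cid_add[OF Dsub cid_sym[OF dom_B] that(1) that(2)] .
  have Bd_diff: "Bd (x - y) = Bd x - Bd y" if "x \<in> D" "y \<in> D" for  x y
    using cid_diff[OF Dsub cid_sym[OF dom_B] that(1) that(2)] .
  have Bd_neg: "Bd (- x) = - Bd x" if "x \<in> D" for  x
    using cid_neg[OF Dsub cid_sym[OF dom_B] that(1)] .
  have Bd_sc: "Bd (r *\<^sub>R x) = r *\<^sub>R Bd x" if "x \<in> D" for  r x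
    using cid_scaleR[OF Dsub cid_sym[OF dom_B] that(1)] .
  have Bd_zero: "Bd 0 = 0"
    using cid_zero[OF Dsub cid_sym[OF dom_B]] .
  have Bd_sum: "Bd (sum f S) = (\<Sum>k\<in>S. Bd (f k))" if "\<forall>k\<in>S. f k \<in> D" for f :: "nat \<Rightarrow> 'a" and S
    using cid_sum[OF Dsub cid_sym[OF dom_B], of S f] that by blast
  have Bd_mem: "Bd x \<in> D" if "x \<in> D" for  x
    using cid_mem[OF cid_sym[OF dom_B] that(1)] .
  have Bd_adj: "cinner (Bd a) b = cinner a (B b)" if "a \<in> D" "b \<in> D" for  a b
    using cid_adj[OF cid_sym[OF cid_sym[OF dom_B]] that(1) that(2), symmetric] .
  have Yt_add: "Yt (x + y) = Yt x + Yt y" if "x \<in> D" "y \<in> D" for  x y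
    using cid_add[OF Dsub A2c_dom that(1) that(2)] .
  have Yt_diff: "Yt (x - y) = Yt x - Yt y" if "x \<in> D" "y \<in> D" for  x y
    using cid_diff[OF Dsub A2c_dom that(1) that(2)] .
  have Yt_neg: "Yt (- x) = - Yt x" if "x \<in> D" for  x
    using cid_neg[OF Dsub A2c_dom that(1)] .
  have Yt_sc: "Yt (r *\<^sub>R x) = r *\<^sub>R Yt x" if "x \<in> D" for  r x
    using cid_scaleR[OF Dsub A2c_dom that(1)] .
  have Yt_zero: "Yt 0 = 0"
    using cid_zero[OF Dsub A2c_dom] .
  have Yt_sum: "Yt (sum f S) = (\<Sum>k\<in>S. Yt (f k))" if "\<forall>k\<in>S. f k \<in> D" for f :: "nat \<Rightarrow> 'a" and S
    using cid_sum[OF Dsub A2c_dom, of S f] that by blast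
  have Yt_mem: "Yt x \<in> D" if "x \<in> D" for  x
    using cid_mem[OF A2c_dom that(1)] .
  have Yt_adj: "cinner (Yt a) b = cinner a (Ytd b)" if "a \<in> D" "b \<in> D" for  a b
    using cid_adj[OF cid_sym[OF A2c_dom] that(1) that(2), symmetric] .
  have Ytd_add: "Ytd (x + y) = Ytd x + Ytd y" if "x \<in> D" "y \<in> D" for  x y
    using cid_add[OF Dsub cid_sym[OF A2c_dom] that(1) that(2)] .
  have Ytd_diff: "Ytd (x - y) = Ytd x - Ytd y" if "x \<in> D" "y \<in> D" for  x y
    using cid_diff[OF Dsub cid_sym[OF A2c_dom] that(1) that(2)] .
  have Ytd_neg: "Ytd (- x) = - Ytd x" if "x \<in> D" for  x
    using cid_neg[OF Dsub cid_sym[OF A2c_dom] that(1)] .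
  have Ytd_sc: "Ytd (r *\<^sub>R x) = r *\<^sub>R Ytd x" if "x \<in> D" for  r x
    using cid_scaleR[OF Dsub cid_sym[OF A2c_dom] that(1)] .
  have Ytd_zero: "Ytd 0 = 0"
    using cid_zero[OF Dsub cid_sym[OF A2c_dom]] .
  have Ytd_sum: "Ytd (sum f S) = (\<Sum>k\<in>S. Ytd (f k))" if "\<forall>k\<in>S. f k \<in> D" for f :: "nat \<Rightarrow> 'a" and S
    using cid_sum[OF Dsub cid_sym[OF A2c_dom], of S f] that by blast
  have Ytd_mem: "Ytd x \<in> D" if "x \<in> D" for  x
    using cid_mem[OF cid_sym[OF A2c_dom] that(1)] .
  have Ytd_adj: "cinner (Ytd a) b = cinner a (Yt b)" if "a \<in> D" "b \<in> D" for  a b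
    using cid_adj[OF cid_sym[OF cid_sym[OF A2c_dom]] that(1) that(2), symmetric] .
  have F_add: "F i (x + y) = F i x + F i y" if "i \<in> {1..n}" "x \<in> D" "y \<in> D" for i x y
    using cid_add[OF Dsub dom_F[OF that(1)] that(2) that(3)] .
  have F_diff: "F i (x - y) = F i x - F i y" if "i \<in> {1..n}" "x \<in> D" "y \<in> D" for i x y
    using cid_diff[OF Dsub dom_F[OF that(1)] that(2) that(3)] .
  have F_neg: "F i (- x) = - F i x" if "i \<in> {1..n}" "x \<in> D" for i x
    using cid_neg[OF Dsub dom_F[OF that(1)] that(2)] .
  have F_sc: "F i (r *\<^sub>R x) = r *\<^sub>R F i x" if "i \<in> {1..n}" "x \<in> D" for i r x
    using cid_scaleR[OF Dsub dom_F[OF that(1)] that(2)] .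
  have F_zero: "F i 0 = 0" if "i \<in> {1..n}" for i
    using cid_zero[OF Dsub dom_F[OF that(1)]] .
  have F_sum: "F i (sum f S) = (\<Sum>k\<in>S. F i (f k))" if "i \<in> {1..n}" "\<forall>k\<in>S. f k \<in> D" for i and f :: "nat \<Rightarrow> 'a" and S
    using cid_sum[OF Dsub dom_F[OF that(1)], of S f] that by blast
  have F_mem: "F i x \<in> D" if "i \<in> {1..n}" "x \<in> D" for i x
    using cid_mem[OF dom_F[OF that(1)] that(2)] .
  have F_adj: "cinner (F i a) b = cinner a (Fd i b)" if "i \<in> {1..n}" "a \<in> D" "b \<in> D" for i a b
    using cid_adj[OF cid_sym[OF dom_F[OF that(1)]] that(2) that(3), symmetric] .
  have Fd_add: "Fd i (x + y) = Fd i x + Fd i y" if "i \<in> {1..n}" "x \<in> D" "y \<in> D" for i x y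
    using cid_add[OF Dsub cid_sym[OF dom_F[OF that(1)]] that(2) that(3)] .
  have Fd_diff: "Fd i (x - y) = Fd i x - Fd i y" if "i \<in> {1..n}" "x \<in> D" "y \<in> D" for i x y
    using cid_diff[OF Dsub cid_sym[OF dom_F[OF that(1)]] that(2) that(3)] .
  have Fd_neg: "Fd i (- x) = - Fd i x" if "i \<in> {1..n}" "x \<in> D" for i x
    using cid_neg[OF Dsub cid_sym[OF dom_F[OF that(1)]] that(2)] .
  have Fd_sc: "Fd i (r *\<^sub>R x) = r *\<^sub>R Fd i x" if "i \<in> {1..n}" "x \<in> D" for i r x
    using cid_scaleR[OF Dsub cid_sym[OF dom_F[OF that(1)]] that(2)] .
  have Fd_zero: "Fd i 0 = 0" if "i \<in> {1..n}" for i
    using cid_zero[OF Dsub cid_sym[OF dom_F[OF that(1)]]] .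
  have Fd_sum: "Fd i (sum f S) = (\<Sum>k\<in>S. Fd i (f k))" if "i \<in> {1..n}" "\<forall>k\<in>S. f k \<in> D" for i and f :: "nat \<Rightarrow> 'a" and S
    using cid_sum[OF Dsub cid_sym[OF dom_F[OF that(1)]], of S f] that by blast
  have Fd_mem: "Fd i x \<in> D" if "i \<in> {1..n}" "x \<in> D" for i x
    using cid_mem[OF cid_sym[OF dom_F[OF that(1)]] that(2)] .
  have Fd_adj: "cinner (Fd i a) b = cinner a (F i b)" if "i \<in> {1..n}" "a \<in> D" "b \<in> D" for i a b
    using cid_adj[OF cid_sym[OF cid_sym[OF dom_F[OF that(1)]]] that(2) that(3), symmetric] .
  have G_add: "G i (x + y) = G i x + G i y" if "i \<in> {1..n}" "x \<in> D" "y \<in> D" for i x y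
    using cid_add[OF Dsub dom_G[OF that(1)] that(2) that(3)] .
  have G_diff: "G i (x - y) = G i x - G i y" if "i \<in> {1..n}" "x \<in> D" "y \<in> D" for i x y
    using cid_diff[OF Dsub dom_G[OF that(1)] that(2) that(3)] .
  have G_neg: "G i (- x) = - G i x" if "i \<in> {1..n}" "x \<in> D" for i x
    using cid_neg[OF Dsub dom_G[OF that(1)] that(2)] .
  have G_sc: "G i (r *\<^sub>R x) = r *\<^sub>R G i x" if "i \<in> {1..n}" "x \<in> D" for i r x
    using cid_scaleR[OF Dsub dom_G[OF that(1)] that(2)] .
  have G_zero: "G i 0 = 0" if "i \<in> {1..n}" for i
    using cid_zero[OF Dsub dom_G[OF that(1)]] .
  have G_sum: "G i (sum f S) = (\<Sum>k\<in>S. G i (f k))" if "i \<in> {1..n}" "\<forall>k\<in>S. f k \<in> D" for i and f :: "nat \<Rightarrow> 'a" and S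
    using cid_sum[OF Dsub dom_G[OF that(1)], of S f] that by blast
  have G_mem: "G i x \<in> D" if "i \<in> {1..n}" "x \<in> D" for i x
    using cid_mem[OF dom_G[OF that(1)] that(2)] .
  have G_adj: "cinner (G i a) b = cinner a (Gd i b)" if "i \<in> {1..n}" "a \<in> D" "b \<in> D" for i a b
    using cid_adj[OF cid_sym[OF dom_G[OF that(1)]] that(2) that(3), symmetric] .
  have Gd_add: "Gd i (x + y) = Gd i x + Gd i y" if "i \<in> {1..n}" "x \<in> D" "y \<in> D" for i x y
    using cid_add[OF Dsub cid_sym[OF dom_G[OF that(1)]] that(2) that(3)] .
  have Gd_diff: "Gd i (x - y) = Gd i x - Gd i y" if "i \<in> {1..n}" "x \<in> D" "y \<in> D" for i x y
    using cid_diff[OF Dsub cid_sym[OF dom_G[OF that(1)]] that(2) that(3)] .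
  have Gd_neg: "Gd i (- x) = - Gd i x" if "i \<in> {1..n}" "x \<in> D" for i x
    using cid_neg[OF Dsub cid_sym[OF dom_G[OF that(1)]] that(2)] .
  have Gd_sc: "Gd i (r *\<^sub>R x) = r *\<^sub>R Gd i x" if "i \<in> {1..n}" "x \<in> D" for i r x
    using cid_scaleR[OF Dsub cid_sym[OF dom_G[OF that(1)]] that(2)] .
  have Gd_zero: "Gd i 0 = 0" if "i \<in> {1..n}" for i
    using cid_zero[OF Dsub cid_sym[OF dom_G[OF that(1)]]] .
  have Gd_sum: "Gd i (sum f S) = (\<Sum>k\<in>S. Gd i (f k))" if "i \<in> {1..n}" "\<forall>k\<in>S. f k \<in> D" for i and f :: "nat \<Rightarrow> 'a" and S
    using cid_sum[OF Dsub cid_sym[OF dom_G[OF that(1)]], of S f] that by blast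
  have Gd_mem: "Gd i x \<in> D" if "i \<in> {1..n}" "x \<in> D" for i x
    using cid_mem[OF cid_sym[OF dom_G[OF that(1)]] that(2)] .
  have Gd_adj: "cinner (Gd i a) b = cinner a (G i b)" if "i \<in> {1..n}" "a \<in> D" "b \<in> D" for i a b
    using cid_adj[OF cid_sym[OF cid_sym[OF dom_G[OF that(1)]]] that(2) that(3), symmetric] .
  have W_add: "W i j (x + y) = W i j x + W i j y" if "i \<in> {1..n}" "j \<in> {1..n}" "x \<in> D" "y \<in> D" for i j x y
    using cid_add[OF Dsub dom_W[OF that(1) that(2)] that(3) that(4)] .
  have W_diff: "W i j (x - y) = W i j x - W i j y" if "i \<in> {1..n}" "j \<in> {1..n}" "x \<in> D" "y \<in> D" for i j x y
    using cid_diff[OF Dsub dom_W[OF that(1) that(2)] that(3) that(4)] .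
  have W_neg: "W i j (- x) = - W i j x" if "i \<in> {1..n}" "j \<in> {1..n}" "x \<in> D" for i j x
    using cid_neg[OF Dsub dom_W[OF that(1) that(2)] that(3)] .
  have W_sc: "W i j (r *\<^sub>R x) = r *\<^sub>R W i j x" if "i \<in> {1..n}" "j \<in> {1..n}" "x \<in> D" for i j r x
    using cid_scaleR[OF Dsub dom_W[OF that(1) that(2)] that(3)] .
  have W_zero: "W i j 0 = 0" if "i \<in> {1..n}" "j \<in> {1..n}" for i j
    using cid_zero[OF Dsub dom_W[OF that(1) that(2)]] .
  have W_sum: "W i j (sum f S) = (\<Sum>k\<in>S. W i j (f k))" if "i \<in> {1..n}" "j \<in> {1..n}" "\<forall>k\<in>S. f k \<in> D" for i j and f :: "nat \<Rightarrow> 'a" and S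
    using cid_sum[OF Dsub dom_W[OF that(1) that(2)], of S f] that by blast
  have W_mem: "W i j x \<in> D" if "i \<in> {1..n}" "j \<in> {1..n}" "x \<in> D" for i j x
    using cid_mem[OF dom_W[OF that(1) that(2)] that(3)] .
  have W_adj: "cinner (W i j a) b = cinner a (Wd i j b)" if "i \<in> {1..n}" "j \<in> {1..n}" "a \<in> D" "b \<in> D" for i j a b
    using cid_adj[OF cid_sym[OF dom_W[OF that(1) that(2)]] that(3) that(4), symmetric] .
  have Wd_add: "Wd i j (x + y) = Wd i j x + Wd i j y" if "i \<in> {1..n}" "j \<in> {1..n}" "x \<in> D" "y \<in> D" for i j x y
    using cid_add[OF Dsub cid_sym[OF dom_W[OF that(1) that(2)]] that(3) that(4)] .
  have Wd_diff: "Wd i j (x - y) = Wd i j x - Wd i j y" if "i \<in> {1..n}" "j \<in> {1..n}" "x \<in> D" "y \<in> D" for i j x y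
    using cid_diff[OF Dsub cid_sym[OF dom_W[OF that(1) that(2)]] that(3) that(4)] .
  have Wd_neg: "Wd i j (- x) = - Wd i j x" if "i \<in> {1..n}" "j \<in> {1..n}" "x \<in> D" for i j x
    using cid_neg[OF Dsub cid_sym[OF dom_W[OF that(1) that(2)]] that(3)] .
  have Wd_sc: "Wd i j (r *\<^sub>R x) = r *\<^sub>R Wd i j x" if "i \<in> {1..n}" "j \<in> {1..n}" "x \<in> D" for i j r x
    using cid_scaleR[OF Dsub cid_sym[OF dom_W[OF that(1) that(2)]] that(3)] .
  have Wd_zero: "Wd i j 0 = 0" if "i \<in> {1..n}" "j \<in> {1..n}" for i j
    using cid_zero[OF Dsub cid_sym[OF dom_W[OF that(1) that(2)]]] .
  have Wd_sum: "Wd i j (sum f S) = (\<Sum>k\<in>S. Wd i j (f k))" if "i \<in> {1..n}" "j \<in> {1..n}" "\<forall>k\<in>S. f k \<in> D" for i j and f :: "nat \<Rightarrow> 'a" and S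
    using cid_sum[OF Dsub cid_sym[OF dom_W[OF that(1) that(2)]], of S f] that by blast
  have Wd_mem: "Wd i j x \<in> D" if "i \<in> {1..n}" "j \<in> {1..n}" "x \<in> D" for i j x
    using cid_mem[OF cid_sym[OF dom_W[OF that(1) that(2)]] that(3)] .
  have Wd_adj: "cinner (Wd i j a) b = cinner a (W i j b)" if "i \<in> {1..n}" "j \<in> {1..n}" "a \<in> D" "b \<in> D" for i j a b
    using cid_adj[OF cid_sym[OF cid_sym[OF dom_W[OF that(1) that(2)]]] that(3) that(4), symmetric] .
  note lin_add = Y_add Yd_add A_add Ad_add B_add Bd_add Yt_add Ytd_add F_add Fd_add G_add Gd_add W_add Wd_add
  note lin_diff = Y_diff Yd_diff A_diff Ad_diff B_diff Bd_diff Yt_diff Ytd_diff F_diff Fd_diff G_diff Gd_diff W_diff Wd_diff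
  note lin_neg = Y_neg Yd_neg A_neg Ad_neg B_neg Bd_neg Yt_neg Ytd_neg F_neg Fd_neg G_neg Gd_neg W_neg Wd_neg
  note lin_sc = Y_sc Yd_sc A_sc Ad_sc B_sc Bd_sc Yt_sc Ytd_sc F_sc Fd_sc G_sc Gd_sc W_sc Wd_sc
  note lin_zero = Y_zero Yd_zero A_zero Ad_zero B_zero Bd_zero Yt_zero Ytd_zero F_zero Fd_zero G_zero Gd_zero W_zero Wd_zero
  note lin_sum = Y_sum Yd_sum A_sum Ad_sum B_sum Bd_sum Yt_sum Ytd_sum F_sum Fd_sum G_sum Gd_sum W_sum Wd_sum
  note lin_mem = Y_mem Yd_mem A_mem Ad_mem B_mem Bd_mem Yt_mem Ytd_mem F_mem Fd_mem G_mem Gd_mem W_mem Wd_mem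
  note lin_adj = Y_adj Yd_adj A_adj Ad_adj B_adj Bd_adj Yt_adj Ytd_adj F_adj Fd_adj G_adj Gd_adj W_adj Wd_adj

  note P0lin = proj_add[OF HP] proj_diff[OF HP] proj_neg[OF HP] proj_scaleR[OF HP] proj_zero[OF HP] proj_sum[OF HP] proj_idem[OF HP]
  have P0_mem: "P0 x \<in> D" if "x \<in> D" for x using A2a that by blast
  have kd_mem: "kdelta a b x \<in> D" if "x \<in> D" for a b x using that csub_0[OF Dsub] by (simp add: kdelta_def)
  have csum_mem: "sum f S \<in> D" if "\<forall>k\<in>S. f k \<in> D" for f :: "nat \<Rightarrow> 'a" and S
    using csub_sum[OF Dsub, of S f] that by blast
  note memD = lin_mem P0_mem kd_mem csub_add[OF Dsub] csub_diff[OF Dsub] csub_neg[OF Dsub] csub_scaleR[OF Dsub] csum_mem csub_0[OF Dsub]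
  note LIN = lin_add lin_diff lin_neg lin_sc lin_zero lin_sum
  have P0adj: "cinner (P0 a) b = cinner a (P0 b)" for a b using proj_selfadj[OF HP] by simp
  have P0cancel: "cinner a (P0 b) = cinner a b" if "P0 a = a" for a b
    using proj_selfadj[OF HP, of a b] that by simp
  have kd_adj: "cinner (kdelta p q a) b = cinner a (kdelta p q b)" for p q a b by (simp add: kdelta_def)
  have kd_lin: "kdelta p q (x + y) = kdelta p q x + kdelta p q y" "kdelta p q (x - y) = kdelta p q x - kdelta p q y"
    "kdelta p q (- x) = - kdelta p q x" "kdelta p q 0 = 0" for p q x y by (auto simp: kdelta_def)
  note CIN = cinner_add_left cinner_add_right cinner_diff_left cinner_diff_right cinner_minus_left
    cinner_minus_right cinner_sum_left cinner_sum_right cinner_scaleR_left cinner_scaleR_right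
  have scK: "Kk k v = (real k)\<^sup>2 *\<^sub>R Y v + real k *\<^sub>R A v + B v" if "k \<ge> 1" "v \<in> D" for k v
    using scal_K[OF that] by (simp add: scaleR_scaleC)
  have scL: "Lk k i v = real k *\<^sub>R F i v + G i v" if "k \<ge> 1" "i \<in> {1..n}" "v \<in> D" for k i v
    using scal_L[OF that] by (simp add: scaleR_scaleC)
  have Lkd_eq: "Lkd k i v = real k *\<^sub>R Fd i v + Gd i v" if k: "k \<ge> 1" and i: "i \<in> {1..n}" and v: "v \<in> D" for k i v
  proof (rule vec_eq_by_cinner[OF Dsub])
    show "Lkd k i v \<in> D" using cid_memd[OF dom_Lk[OF k i] v] .
    show "real k *\<^sub>R Fd i v + Gd i v \<in> D" using i v by (simp add: memD)
    fix u assume u: "u \<in> D"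
    have "cinner u (Lkd k i v) = cinner (Lk k i u) v" using cid_adj[OF cid_sym[OF dom_Lk[OF k i]] u v] .
    also have "\<dots> = cinner (real k *\<^sub>R F i u + G i u) v" using scL[OF k i u] by simp
    also have "\<dots> = cinner u (real k *\<^sub>R Fd i v + Gd i v)" using i u v by (simp add: CIN lin_adj memD)
    finally show "cinner u (Lkd k i v) = cinner u (real k *\<^sub>R Fd i v + Gd i v)" .
  qed
  have Kkd_eq: "Kkd k v = (real k)\<^sup>2 *\<^sub>R Yd v + real k *\<^sub>R Ad v + Bd v" if k: "k \<ge> 1" and v: "v \<in> D" for k v
  proof (rule vec_eq_by_cinner[OF Dsub])
    show "Kkd k v \<in> D" using cid_memd[OF dom_Kk[OF k] v] .
    show "(real k)\<^sup>2 *\<^sub>R Yd v + real k *\<^sub>R Ad v + Bd v \<in> D" using v by (simp add: memD)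
    fix u assume u: "u \<in> D"
    have "cinner u (Kkd k v) = cinner (Kk k u) v" using cid_adj[OF cid_sym[OF dom_Kk[OF k]] u v] .
    also have "\<dots> = cinner ((real k)\<^sup>2 *\<^sub>R Y u + real k *\<^sub>R A u + B u) v" using scK[OF k u] by simp
    also have "\<dots> = cinner u ((real k)\<^sup>2 *\<^sub>R Yd v + real k *\<^sub>R Ad v + Bd v)" using u v by (simp add: CIN lin_adj memD)
    finally show "cinner u (Kkd k v) = cinner u ((real k)\<^sup>2 *\<^sub>R Yd v + real k *\<^sub>R Ad v + Bd v)" .
  qed
  have Nkd_eq: "Nkd k i j v = Wd i j v" if k: "k \<ge> 1" and i: "i \<in> {1..n}" and j: "j \<in> {1..n}" and v: "v \<in> D" for k i j v
  proof (rule vec_eq_by_cinner[OF Dsub])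
    show "Nkd k i j v \<in> D" using cid_memd[OF dom_Nk[OF k i j] v] .
    show "Wd i j v \<in> D" using i j v by (simp add: memD)
    fix u assume u: "u \<in> D"
    have "cinner u (Nkd k i j v) = cinner (Nk k i j u) v" using cid_adj[OF cid_sym[OF dom_Nk[OF k i j]] u v] .
    also have "\<dots> = cinner (W i j u) v" using scal_N[OF k i j u] by simp
    also have "\<dots> = cinner u (Wd i j v)" using i j u v by (simp add: lin_adj)
    finally show "cinner u (Nkd k i j v) = cinner u (Wd i j v)" .
  qed
  have LL: "Lk k i (Lkd k i v) = (real k)\<^sup>2 *\<^sub>R F i (Fd i v) + real k *\<^sub>R (F i (Gd i v) + G i (Fd i v)) + G i (Gd i v)"
    if k: "k \<ge> 1" and i: "i \<in> {1..n}" and v: "v \<in> D" for k i v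
    using k i v by (simp add: Lkd_eq scL memD LIN algebra_simps power2_eq_square)
  have C123: "Y v + Yd v + (\<Sum>i=1..n. F i (Fd i v)) = 0 \<and>
      A v + Ad v + (\<Sum>i=1..n. F i (Gd i v) + G i (Fd i v)) = 0 \<and>
      B v + Bd v + (\<Sum>i=1..n. G i (Gd i v)) = 0" if v: "v \<in> D" for v
  proof (rule poly3)
    fix k :: nat assume k: "k \<ge> 1"
    have e1: "Kk k v + Kkd k v = - (\<Sum>i=1..n. Lk k i (Lkd k i v))" using HP_K[OF k v] .
    have e2: "(\<Sum>i=1..n. Lk k i (Lkd k i v)) = (real k)\<^sup>2 *\<^sub>R (\<Sum>i=1..n. F i (Fd i v))
        + real k *\<^sub>R (\<Sum>i=1..n. F i (Gd i v) + G i (Fd i v)) + (\<Sum>i=1..n. G i (Gd i v))"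
      using k v by (simp add: LL scaleR_sum_right sum.distrib scaleR_add_right)
    have "(real k)\<^sup>2 *\<^sub>R (Y v + Yd v + (\<Sum>i=1..n. F i (Fd i v))) +
      real k *\<^sub>R (A v + Ad v + (\<Sum>i=1..n. F i (Gd i v) + G i (Fd i v))) +
      (B v + Bd v + (\<Sum>i=1..n. G i (Gd i v))) = (Kk k v + Kkd k v) + (\<Sum>i=1..n. Lk k i (Lkd k i v))"
      unfolding e2 using k v by (simp add: scK Kkd_eq algebra_simps)
    also have "\<dots> = 0" unfolding e1 by simp
    finally show "(real k)\<^sup>2 *\<^sub>R (Y v + Yd v + (\<Sum>i=1..n. F i (Fd i v))) +
      real k *\<^sub>R (A v + Ad v + (\<Sum>i=1..n. F i (Gd i v) + G i (Fd i v))) +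
      (B v + Bd v + (\<Sum>i=1..n. G i (Gd i v))) = 0" .
  qed
  have C1: "(\<Sum>i=1..n. F i (Fd i v)) = - (Y v + Yd v)" if "v \<in> D" for v
  proof -
    have h: "(Y v + Yd v) + (\<Sum>i=1..n. F i (Fd i v)) = 0" using C123[OF that] by blast
    show ?thesis by (rule minus_unique[OF h, symmetric])
  qed
  have C2: "(\<Sum>i=1..n. F i (Gd i v)) = - (A v + Ad v) - (\<Sum>i=1..n. G i (Fd i v))" if "v \<in> D" for v
    using C123[OF that] by (simp add: sum.distrib algebra_simps eq_neg_iff_add_eq_0)
  have C3: "(\<Sum>i=1..n. G i (Gd i v)) = - (B v + Bd v)" if "v \<in> D" for v
  proof -
    have h: "(B v + Bd v) + (\<Sum>i=1..n. G i (Gd i v)) = 0" using C123[OF that] by blast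
    show ?thesis by (rule minus_unique[OF h, symmetric])
  qed
  have C4: "(\<Sum>j=1..n. W m j (Wd l j v)) = kdelta m l v" if m: "m \<in> {1..n}" and l: "l \<in> {1..n}" and v: "v \<in> D" for m l v
    using HP_N1[of 1 m l v] m l v by (simp add: scal_N Nkd_eq memD)
  have C5: "(\<Sum>j=1..n. Wd j m (W j l v)) = kdelta m l v" if m: "m \<in> {1..n}" and l: "l \<in> {1..n}" and v: "v \<in> D" for m l v
    using HP_N2[of 1 m l v] m l v by (simp add: scal_N Nkd_eq memD)
  have C1s: "(\<Sum>i=Suc 0..n. F i (Fd i v)) = - (Y v + Yd v)" if "v \<in> D" for v
    using C1[OF that] by simp
  have C2s: "(\<Sum>i=Suc 0..n. F i (Gd i v)) = - (A v + Ad v) - (\<Sum>i=Suc 0..n. G i (Fd i v))" if "v \<in> D" for v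
    using C2[OF that] by simp
  have C3s: "(\<Sum>i=Suc 0..n. G i (Gd i v)) = - (B v + Bd v)" if "v \<in> D" for v
    using C3[OF that] by simp
  have C4s: "(\<Sum>j=Suc 0..n. W m j (Wd l j v)) = kdelta m l v" if "m \<in> {1..n}" "l \<in> {1..n}" "v \<in> D" for m l v
    using C4[OF that] by simp
  have C5s: "(\<Sum>j=Suc 0..n. Wd j m (W j l v)) = kdelta m l v" if "m \<in> {1..n}" "l \<in> {1..n}" "v \<in> D" for m l v
    using C5[OF that] by simp
  have P1e: "P1 x = x - P0 x" for x by (rule P1_def)
  have YtY: "Yt (Y v) = v - P0 v" if "v \<in> D" for v using A2c[OF that] P1e by simp
  have YYt: "Y (Yt v) = v - P0 v" if "v \<in> D" for v using A2c[OF that] P1e by simp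
  have YdYtd: "Yd (Ytd v) = v - P0 v" if v: "v \<in> D" for v
  proof (rule vec_eq_by_cinner[OF Dsub])
    show "Yd (Ytd v) \<in> D" "v - P0 v \<in> D" using v by (simp_all add: memD)
    fix u assume u: "u \<in> D"
    have "cinner u (Yd (Ytd v)) = cinner (Yt (Y u)) v" using u v by (simp add: lin_adj memD)
    also have "\<dots> = cinner (u - P0 u) v" using YtY[OF u] by simp
    also have "\<dots> = cinner u (v - P0 v)" by (simp add: CIN P0adj)
    finally show "cinner u (Yd (Ytd v)) = cinner u (v - P0 v)" .
  qed
  have YtdYd: "Ytd (Yd v) = v - P0 v" if v: "v \<in> D" for v
  proof (rule vec_eq_by_cinner[OF Dsub])
    show "Ytd (Yd v) \<in> D" "v - P0 v \<in> D" using v by (simp_all add: memD)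
    fix u assume u: "u \<in> D"
    have "cinner u (Ytd (Yd v)) = cinner (Y (Yt u)) v" using u v by (simp add: lin_adj memD)
    also have "\<dots> = cinner (u - P0 u) v" using YYt[OF u] by simp
    also have "\<dots> = cinner u (v - P0 v)" by (simp add: CIN P0adj)
    finally show "cinner u (Ytd (Yd v)) = cinner u (v - P0 v)" .
  qed
  have P0F: "P0 (F i v) = 0" if i: "i \<in> {1..n}" and v: "v \<in> D" for i v
  proof (rule vec_eq_by_cinner[OF Dsub])
    show "P0 (F i v) \<in> D" "0 \<in> D" using i v by (simp_all add: memD)
    fix u assume u: "u \<in> D"
    have "cinner u (P0 (F i v)) = cinner (Fd i (P0 u)) v"
      using i u v proj_selfadj[OF HP, of u "F i v"] cid_adj[OF dom_F[OF i], of "P0 u" v] by (simp add: memD)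
    also have "\<dots> = 0" using A2d[OF i u] by simp
    finally show "cinner u (P0 (F i v)) = cinner u 0" by simp
  qed
  have P0Fs: "P0 (\<Sum>i=1..n. F i (f i)) = 0" if "\<And>i. i \<in> {1..n} \<Longrightarrow> f i \<in> D" for f
    using that by (simp add: P0lin P0F)
  have YtP0: "P0 (Yt (P0 v)) = Yt (P0 v)" if v: "v \<in> D" for v
  proof -
    have "Y (Yt (P0 v)) = 0" using YYt[of "P0 v"] v by (simp add: memD P0lin)
    then have "Yt (Y (Yt (P0 v))) = 0" by (simp add: Yt_zero)
    then show ?thesis using YtY[of "Yt (P0 v)"] v by (simp add: memD)
  qed
  have FdP0: "Fd i (P0 v) = 0" if "i \<in> {1..n}" "v \<in> D" for i v using A2d that .
  have FdYtP0: "Fd i (Yt (P0 v)) = 0" if i: "i \<in> {1..n}" and v: "v \<in> D" for i v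
    using A2d[OF i, of "Yt (P0 v)"] YtP0[OF v] v by (simp add: memD)
  have AP0: "P0 (A (P0 v)) = 0" if "v \<in> D" for v using A2e that .
  have AYtP0: "P0 (A (Yt (P0 v))) = 0" if v: "v \<in> D" for v
    using A2e[of "Yt (P0 v)"] YtP0[OF v] v by (simp add: memD)
  define D0 where "D0 = P0 ` D"
  have D0sub: "csubspace D0" unfolding D0_def by (rule csub_proj_image[OF HP Dsub])
  have D0D: "v \<in> D" "P0 v = v" if "v \<in> D0" for v
    using that unfolding D0_def by (auto simp: memD P0lin)
  have D0I: "P0 x \<in> D0" if "x \<in> D" for x using that unfolding D0_def by blast
  have Kd_eq: "Kd v = P0 (Bd v - Ad (Ytd (Ad v)))" if v: "v \<in> D0" for v
  proof (rule vec_eq_by_cinner[OF D0sub])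
    show "Kd v \<in> D0" using cid_memd[OF dom_K0] v unfolding D0_def by blast
    show "P0 (Bd v - Ad (Ytd (Ad v))) \<in> D0" using D0D[OF v] by (simp add: D0I memD)
    fix u assume u: "u \<in> D0"
    have "cinner u (Kd v) = cinner (limK P0 A B Yt u) v" using cid_adj[OF cid_sym[OF dom_K0], of u v] u v unfolding D0_def by blast
    also have "\<dots> = cinner u (P0 (Bd v - Ad (Ytd (Ad v))))"
      using D0D[OF u] D0D[OF v] by (simp add: limK_def P0adj P0cancel CIN lin_adj memD)
    finally show "cinner u (Kd v) = cinner u (P0 (Bd v - Ad (Ytd (Ad v))))" .
  qed
  have Ld_eq: "Ld i v = P0 (Gd i v - Fd i (Ytd (Ad v)))" if i: "i \<in> {1..n}" and v: "v \<in> D0" for i v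
  proof (rule vec_eq_by_cinner[OF D0sub])
    show "Ld i v \<in> D0" using cid_memd[OF dom_L0[OF i]] v unfolding D0_def by blast
    show "P0 (Gd i v - Fd i (Ytd (Ad v))) \<in> D0" using i D0D[OF v] by (simp add: D0I memD)
    fix u assume u: "u \<in> D0"
    have "cinner u (Ld i v) = cinner (limL P0 A F G Yt i u) v" using cid_adj[OF cid_sym[OF dom_L0[OF i]], of u v] u v unfolding D0_def by blast
    also have "\<dots> = cinner u (P0 (Gd i v - Fd i (Ytd (Ad v))))"
      using i D0D[OF u] D0D[OF v] by (simp add: limL_def P0adj P0cancel CIN lin_adj memD)
    finally show "cinner u (Ld i v) = cinner u (P0 (Gd i v - Fd i (Ytd (Ad v))))" .
  qed
  have Nd_eq: "Nd i j v = (\<Sum>l=1..n. P0 (Fd j (Ytd (F l (Wd i l v))) + kdelta l j (Wd i l v)))"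
    if i: "i \<in> {1..n}" and j: "j \<in> {1..n}" and v: "v \<in> D0" for i j v
  proof (rule vec_eq_by_cinner[OF D0sub])
    show "Nd i j v \<in> D0" using cid_memd[OF dom_N0[OF i j]] v unfolding D0_def by blast
    show "(\<Sum>l=1..n. P0 (Fd j (Ytd (F l (Wd i l v))) + kdelta l j (Wd i l v))) \<in> D0"
      unfolding proj_sum[OF HP, symmetric] using i j D0D[OF v] by (intro D0I csub_sum[OF Dsub]) (simp add: memD)
    fix u assume u: "u \<in> D0"
    have "cinner u (Nd i j v) = cinner (limN n P0 F Fd W Yt i j u) v" using cid_adj[OF cid_sym[OF dom_N0[OF i j]], of u v] u v unfolding D0_def by blast
    also have "\<dots> = cinner u (\<Sum>l=1..n. P0 (Fd j (Ytd (F l (Wd i l v))) + kdelta l j (Wd i l v)))"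
      using i j D0D[OF u] D0D[OF v] by (simp add: limN_def P0adj P0cancel CIN lin_adj memD kd_adj)
    finally show "cinner u (Nd i j v) = cinner u (\<Sum>l=1..n. P0 (Fd j (Ytd (F l (Wd i l v))) + kdelta l j (Wd i l v)))" .
  qed
  have FdD0: "Fd j v = 0" if j: "j \<in> {1..n}" and v: "v \<in> D0" for j v
    using A2d[OF j, of v] D0D[OF v] by simp
  have S_eq: "(\<Sum>j=1..n. F j (Gd j v - Fd j (Ytd (Ad v)))) = - (A v + Ad v) + Y (Ytd (Ad v)) + Yd (Ytd (Ad v))"
    if v: "v \<in> D0" for v
  proof -
    have vD: "v \<in> D" using D0D[OF v] by simp
    have s1: "(\<Sum>j=1..n. F j (Gd j v - Fd j (Ytd (Ad v)))) = (\<Sum>j=1..n. F j (Gd j v)) - (\<Sum>j=1..n. F j (Fd j (Ytd (Ad v))))"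
      using vD by (simp add: LIN memD sum_subtractf)
    have s2: "(\<Sum>j=1..n. G j (Fd j v)) = 0" using v by (simp add: FdD0 G_zero)
    have c1: "(\<Sum>j=1..n. F j (Fd j (Ytd (Ad v)))) = - (Y (Ytd (Ad v)) + Yd (Ytd (Ad v)))"
      using vD by (intro C1) (simp add: memD)
    show ?thesis unfolding s1 C2[OF vD] s2 c1 by (simp add: algebra_simps)
  qed
  have T_eq: "Yt (\<Sum>j=1..n. F j (Gd j v - Fd j (Ytd (Ad v)))) = - Yt (A v) + (Ytd (Ad v) - P0 (Ytd (Ad v))) - Yt (P0 (Ad v))"
    if v: "v \<in> D0" for v
  proof -
    have vD: "v \<in> D" using D0D[OF v] by simp
    show ?thesis unfolding S_eq[OF v] using vD by (simp add: LIN memD YtY YdYtd P0lin algebra_simps)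
  qed
  have LA: "P0 (G i (P0 z) - A (Yt (F i (P0 z)))) = P0 (G i z - A (Yt (F i z)))" if i: "i \<in> {1..n}" and z: "z \<in> D" for i z
  proof -
    have e: "G i (z - P0 z) - A (Yt (F i (z - P0 z))) = (G i z - A (Yt (F i z))) - (G i (P0 z) - A (Yt (F i (P0 z))))"
      using i z by (simp add: LIN memD algebra_simps)
    have "P0 (G i z - A (Yt (F i z))) - P0 (G i (P0 z) - A (Yt (F i (P0 z)))) = 0"
      using A3a[OF i z] unfolding P1e e by (simp add: P0lin)
    then show ?thesis by simp
  qed
  have goal1: "limK P0 A B Yt v + Kd v = - (\<Sum>i = 1..n. limL P0 A F G Yt i (Ld i v))" if v: "v \<in> D0" for v
  proof -
    have vD: "v \<in> D" and pv: "P0 v = v" using D0D[OF v] by auto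
    define w where "w = Ytd (Ad v)"
    have wD: "w \<in> D" using vD unfolding w_def by (simp add: memD)
    define z where "z j = Gd j v - Fd j w" for j
    have zD: "z j \<in> D" if "j \<in> {1..n}" for j using that vD wD unfolding z_def by (simp add: memD)
    have l1: "limL P0 A F G Yt i (Ld i v) = P0 (G i (z i) - A (Yt (F i (z i))))" if i: "i \<in> {1..n}" for i
    proof -
      have "Ld i v = P0 (z i)" using Ld_eq[OF i v] unfolding z_def w_def .
      then show ?thesis unfolding limL_def using LA[OF i zD[OF i]] by (simp add: P0lin)
    qed
    have l2: "(\<Sum>i = 1..n. limL P0 A F G Yt i (Ld i v)) = P0 (\<Sum>i = 1..n. G i (z i)) - P0 (A (Yt (\<Sum>i = 1..n. F i (z i))))"
      using zD by (simp add: l1 P0lin LIN memD sum_subtractf)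
    have l3: "Yt (\<Sum>i = 1..n. F i (z i)) = - Yt (A v) + (w - P0 w) - Yt (P0 (Ad v))"
      using T_eq[OF v] unfolding z_def w_def .
    have l4: "P0 (A (Yt (\<Sum>i = 1..n. F i (z i)))) = - P0 (A (Yt (A v))) + P0 (A w)"
      unfolding l3 using vD wD AP0[OF wD] AYtP0[of "Ad v"] by (simp add: LIN P0lin memD)
    have l5: "(\<Sum>i = 1..n. G i (z i)) = - (B v + Bd v) - (\<Sum>i = 1..n. G i (Fd i w))"
      unfolding z_def using vD wD by (simp add: LIN memD sum_subtractf C3 C3s)
    have l6: "P0 (\<Sum>i = 1..n. G i (Fd i w)) = - P0 (A w) - P0 (Ad w)"
    proof -
      have h0: "P0 (\<Sum>i=1..n. F i (Gd i w)) = 0" using wD by (intro P0Fs) (simp add: memD)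
      have h1: "(\<Sum>i = 1..n. G i (Fd i w)) = - (A w + Ad w) - (\<Sum>i=1..n. F i (Gd i w))"
        using C2[OF wD] by (simp add: algebra_simps)
      show ?thesis unfolding h1 proj_diff[OF HP] h0 by (simp add: P0lin)
    qed
    have lhs: "limK P0 A B Yt v + Kd v = P0 (B v) - P0 (A (Yt (A v))) + P0 (Bd v) - P0 (Ad w)"
      unfolding limK_def Kd_eq[OF v] pv w_def by (simp add: P0lin)
    show ?thesis unfolding lhs l2 l4 l5 proj_diff[OF HP] l6 by (simp add: P0lin algebra_simps)
  qed
  have P0kd: "P0 (kdelta a b x) = kdelta a b (P0 x)" for a b x by (simp add: kdelta_def P0lin)
  have kdsum1: "(\<Sum>k=1..n. kdelta k j (f k)) = f j" if "j \<in> {1..n}" for j and f :: "nat \<Rightarrow> 'a"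
    using that by (simp add: kdelta_def)
  have kdsum1s: "(\<Sum>k=Suc 0..n. kdelta k j (f k)) = f j" if "j \<in> {1..n}" for j and f :: "nat \<Rightarrow> 'a"
    using that by (simp add: kdelta_def)
  have kdsum2s: "(\<Sum>k=Suc 0..n. kdelta j k (f k)) = f j" if "j \<in> {1..n}" for j and f :: "nat \<Rightarrow> 'a"
    using that by (simp add: kdelta_def)
  have kdsum2: "(\<Sum>k=1..n. kdelta j k (f k)) = f j" if "j \<in> {1..n}" for j and f :: "nat \<Rightarrow> 'a"
    using that by (simp add: kdelta_def)
  have NP0: "limN n P0 F Fd W Yt i j (P0 z) = (\<Sum>l=1..n. P0 (W i l (Fd l (Yt (F j z)) + kdelta l j z)))"
    if i: "i \<in> {1..n}" and j: "j \<in> {1..n}" and z: "z \<in> D" for i j z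
  proof -
    have e: "P0 (W i l (Fd l (Yt (F j (z - P0 z))) + kdelta l j (z - P0 z))) =
        P0 (W i l (Fd l (Yt (F j z)) + kdelta l j z)) - P0 (W i l (Fd l (Yt (F j (P0 z))) + kdelta l j (P0 z)))"
      if l: "l \<in> {1..n}" for l
      using i j l z by (simp add: LIN memD kd_lin P0lin algebra_simps)
    have "(\<Sum>l=1..n. P0 (W i l (Fd l (Yt (F j z)) + kdelta l j z))) - (\<Sum>l=1..n. P0 (W i l (Fd l (Yt (F j (P0 z))) + kdelta l j (P0 z)))) = 0"
      using A3b[OF i j z] unfolding P1e by (simp add: e sum_subtractf)
    then show ?thesis unfolding limN_def by (simp add: proj_idem[OF HP])
  qed
  have SW: "(\<Sum>j=1..n. limN n P0 F Fd W Yt i j (P0 (z j))) = (\<Sum>l=1..n. P0 (W i l (Fd l (Yt (\<Sum>j=1..n. F j (z j))) + z l)))"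
    if i: "i \<in> {1..n}" and zD: "\<And>j. j \<in> {1..n} \<Longrightarrow> z j \<in> D" for i z
  proof -
    have "(\<Sum>j=1..n. limN n P0 F Fd W Yt i j (P0 (z j))) = (\<Sum>j=1..n. \<Sum>l=1..n. P0 (W i l (Fd l (Yt (F j (z j))) + kdelta l j (z j))))"
      by (rule sum.cong[OF refl]) (simp add: NP0[OF i _ zD])
    also have "\<dots> = (\<Sum>l=1..n. \<Sum>j=1..n. P0 (W i l (Fd l (Yt (F j (z j))) + kdelta l j (z j))))"
      by (rule sum.swap)
    also have "\<dots> = (\<Sum>l=1..n. P0 (W i l (Fd l (Yt (\<Sum>j=1..n. F j (z j))) + z l)))"
    proof (rule sum.cong[OF refl])
      fix l assume l: "l \<in> {1..n}"
      have kd: "(\<Sum>j=1..n. kdelta l j (z j)) = z l" using kdsum2[OF l] .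
      have "P0 (W i l (Fd l (Yt (\<Sum>j=1..n. F j (z j))) + z l)) = P0 (W i l (Fd l (Yt (\<Sum>j=1..n. F j (z j))) + (\<Sum>j=1..n. kdelta l j (z j))))"
        by (simp only: kd)
      also have "\<dots> = (\<Sum>j=1..n. P0 (W i l (Fd l (Yt (F j (z j))) + kdelta l j (z j))))"
        using i l zD by (simp add: LIN memD P0lin sum.distrib)
      finally show "(\<Sum>j=1..n. P0 (W i l (Fd l (Yt (F j (z j))) + kdelta l j (z j)))) = P0 (W i l (Fd l (Yt (\<Sum>j=1..n. F j (z j))) + z l))"
        by simp
    qed
    finally show ?thesis .
  qed
  have goal2: "limM n P0 A Fd Gd W Yt i v = - (\<Sum>j = 1..n. limN n P0 F Fd W Yt i j (Ld j v))"
    if i: "i \<in> {1..n}" and v: "v \<in> D0" for i v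
  proof -
    have vD: "v \<in> D" and pv: "P0 v = v" using D0D[OF v] by auto
    define w where "w = Ytd (Ad v)"
    have wD: "w \<in> D" using vD unfolding w_def by (simp add: memD)
    define z where "z j = Gd j v - Fd j w" for j
    have zD: "z j \<in> D" if "j \<in> {1..n}" for j using that vD wD unfolding z_def by (simp add: memD)
    have l3: "Yt (\<Sum>i = 1..n. F i (z i)) = - Yt (A v) + (w - P0 w) - Yt (P0 (Ad v))"
      using T_eq[OF v] unfolding z_def w_def .
    have "(\<Sum>j = 1..n. limN n P0 F Fd W Yt i j (Ld j v)) = (\<Sum>j = 1..n. limN n P0 F Fd W Yt i j (P0 (z j)))"
      by (rule sum.cong[OF refl]) (simp add: Ld_eq[OF _ v] z_def w_def)
    also have "\<dots> = (\<Sum>l=1..n. P0 (W i l (Fd l (Yt (\<Sum>j=1..n. F j (z j))) + z l)))"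
      by (rule SW[OF i zD])
    also have "\<dots> = (\<Sum>l=1..n. P0 (W i l (Gd l v - Fd l (Yt (A v)))))"
    proof (rule sum.cong[OF refl])
      fix l assume l: "l \<in> {1..n}"
      have "Fd l (Yt (\<Sum>j=1..n. F j (z j))) + z l = Gd l v - Fd l (Yt (A v))"
        unfolding l3 using l vD wD by (simp add: z_def LIN memD FdP0 FdYtP0 algebra_simps)
      then show "P0 (W i l (Fd l (Yt (\<Sum>j=1..n. F j (z j))) + z l)) = P0 (W i l (Gd l v - Fd l (Yt (A v))))" by simp
    qed
    finally show ?thesis unfolding limM_def pv by simp
  qed
  have goal3a: "(\<Sum>j = 1..n. limN n P0 F Fd W Yt m j (Nd l j v)) = kdelta m l v"
    if m: "m \<in> {1..n}" and l: "l \<in> {1..n}" and v: "v \<in> D0" for m l v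
  proof -
    have vD: "v \<in> D" and pv: "P0 v = v" using D0D[OF v] by auto
    define r where "r = (\<Sum>k=1..n. F k (Wd l k v))"
    have rD: "r \<in> D" unfolding r_def using l vD by (simp add: memD)
    have P0r: "P0 r = 0" unfolding r_def using l vD by (intro P0Fs) (simp add: memD)
    define q where "q = Ytd r"
    have qD: "q \<in> D" unfolding q_def using rD by (simp add: memD)
    have Ydq: "Yd q = r - P0 r" unfolding q_def using YdYtd[OF rD] .
    define y where "y j = Fd j q + Wd l j v" for j
    have yD: "y j \<in> D" if "j \<in> {1..n}" for j using that l qD vD unfolding y_def by (simp add: memD)
    have Ndy: "Nd l j v = P0 (y j)" if j: "j \<in> {1..n}" for j
      unfolding Nd_eq[OF l j v] y_def q_def r_def using j l vD
      by (simp add: LIN memD P0lin P0kd kdsum1 kdsum1s sum.distrib)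
    have sF: "(\<Sum>j=1..n. F j (y j)) = (\<Sum>j=1..n. F j (Fd j q)) + r"
      unfolding y_def r_def using l qD vD by (simp add: LIN memD sum.distrib)
    have TT: "Yt (\<Sum>j=1..n. F j (y j)) = P0 q - q"
      unfolding sF C1[OF qD] using qD rD by (simp add: LIN memD YtY Ydq P0r algebra_simps)
    have "(\<Sum>j = 1..n. limN n P0 F Fd W Yt m j (Nd l j v)) = (\<Sum>j = 1..n. limN n P0 F Fd W Yt m j (P0 (y j)))"
      by (rule sum.cong[OF refl]) (simp add: Ndy)
    also have "\<dots> = (\<Sum>a=1..n. P0 (W m a (Fd a (Yt (\<Sum>j=1..n. F j (y j))) + y a)))"
      by (rule SW[OF m yD])
    also have "\<dots> = (\<Sum>a=1..n. P0 (W m a (Wd l a v)))"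
    proof (rule sum.cong[OF refl])
      fix a assume a: "a \<in> {1..n}"
      have "Fd a (Yt (\<Sum>j=1..n. F j (y j))) + y a = Wd l a v"
        unfolding TT using a l qD vD by (simp add: y_def LIN memD FdP0)
      then show "P0 (W m a (Fd a (Yt (\<Sum>j=1..n. F j (y j))) + y a)) = P0 (W m a (Wd l a v))" by simp
    qed
    also have "\<dots> = P0 (kdelta m l v)" unfolding C4[OF m l vD, symmetric] by (simp add: proj_sum[OF HP])
    also have "\<dots> = kdelta m l v" using pv by (simp add: P0kd)
    finally show ?thesis .
  qed
  have Fkd: "F k (kdelta a b x) = kdelta a b (F k x)" if "k \<in> {1..n}" for k a b x
    using that by (simp add: kdelta_def F_zero)
  have goal3b: "(\<Sum>j = 1..n. Nd j m (limN n P0 F Fd W Yt j l v)) = kdelta m l v"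
    if m: "m \<in> {1..n}" and l: "l \<in> {1..n}" and v: "v \<in> D0" for m l v
  proof -
    have vD: "v \<in> D" and pv: "P0 v = v" using D0D[OF v] by auto
    define p where "p = Yt (F l v)"
    have pD: "p \<in> D" unfolding p_def using l vD by (simp add: memD)
    define u where "u a = Fd a p + kdelta a l v" for a
    have uD: "u a \<in> D" if "a \<in> {1..n}" for a using that pD vD unfolding u_def by (simp add: memD)
    define x where "x j = (\<Sum>a=1..n. W j a (u a))" for j
    have xD: "x j \<in> D" if "j \<in> {1..n}" for j using that uD unfolding x_def by (simp add: memD)
    have limx: "limN n P0 F Fd W Yt j l v = P0 (x j)" if j: "j \<in> {1..n}" for j
      unfolding limN_def x_def u_def p_def pv using j l vD by (simp add: P0lin memD)
    have Px: "P0 (x j) = x j" if j: "j \<in> {1..n}" for j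
    proof -
      have "(\<Sum>a=1..n. W j a (u a) - P0 (W j a (u a))) = 0"
        using A3c[OF j l vD] unfolding P1e pv u_def p_def .
      then have "x j - P0 (x j) = 0" unfolding x_def using j uD by (simp add: P0lin memD sum_subtractf)
      then show ?thesis by simp
    qed
    have xD0: "x j \<in> D0" if "j \<in> {1..n}" for j using D0I[OF xD[OF that]] Px[OF that] by simp
    have Wdx: "(\<Sum>j=1..n. Wd j k (x j)) = u k" if k: "k \<in> {1..n}" for k
    proof -
      have "(\<Sum>j=1..n. Wd j k (x j)) = (\<Sum>j=1..n. \<Sum>a=1..n. Wd j k (W j a (u a)))"
        unfolding x_def using k uD by (intro sum.cong[OF refl]) (simp add: memD LIN)
      also have "\<dots> = (\<Sum>a=1..n. \<Sum>j=1..n. Wd j k (W j a (u a)))" by (rule sum.swap)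
      also have "\<dots> = (\<Sum>a=1..n. kdelta k a (u a))" using k uD by (intro sum.cong[OF refl]) (simp add: C5 C5s)
      also have "\<dots> = u k" using kdsum2[OF k] .
      finally show ?thesis .
    qed
    have Ndx: "Nd j m (x j) = (\<Sum>k=1..n. P0 (Fd m (Ytd (F k (Wd j k (x j)))))) + P0 (Wd j m (x j))"
      if j: "j \<in> {1..n}" for j
      unfolding Nd_eq[OF j m xD0[OF j]] using j m xD[OF j] by (simp add: P0lin P0kd kdsum1 kdsum1s sum.distrib memD)
    have "(\<Sum>j = 1..n. Nd j m (limN n P0 F Fd W Yt j l v)) = (\<Sum>j = 1..n. Nd j m (x j))"
      by (rule sum.cong[OF refl]) (simp add: limx Px)
    also have "\<dots> = (\<Sum>j=1..n. \<Sum>k=1..n. P0 (Fd m (Ytd (F k (Wd j k (x j)))))) + (\<Sum>j=1..n. P0 (Wd j m (x j)))"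
      by (simp add: Ndx sum.distrib)
    also have "(\<Sum>j=1..n. \<Sum>k=1..n. P0 (Fd m (Ytd (F k (Wd j k (x j)))))) = (\<Sum>k=1..n. \<Sum>j=1..n. P0 (Fd m (Ytd (F k (Wd j k (x j))))))"
      by (rule sum.swap)
    also have "\<dots> = (\<Sum>k=1..n. P0 (Fd m (Ytd (F k (u k)))))"
    proof (rule sum.cong[OF refl])
      fix k assume k: "k \<in> {1..n}"
      have "(\<Sum>j=1..n. P0 (Fd m (Ytd (F k (Wd j k (x j)))))) = P0 (Fd m (Ytd (F k (\<Sum>j=1..n. Wd j k (x j)))))"
        using k m xD by (simp add: LIN memD P0lin)
      then show "(\<Sum>j=1..n. P0 (Fd m (Ytd (F k (Wd j k (x j)))))) = P0 (Fd m (Ytd (F k (u k))))"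
        unfolding Wdx[OF k] .
    qed
    also have "(\<Sum>j=1..n. P0 (Wd j m (x j))) = P0 (u m)"
      unfolding Wdx[OF m, symmetric] by (simp add: proj_sum[OF HP])
    also have "(\<Sum>k=1..n. P0 (Fd m (Ytd (F k (u k))))) = P0 (Fd m (Ytd (\<Sum>k=1..n. F k (u k))))"
      using m uD by (simp add: LIN memD P0lin)
    also have "(\<Sum>k=1..n. F k (u k)) = - (Y p + Yd p) + F l v"
      unfolding u_def using l pD vD by (simp add: LIN memD sum.distrib C1 C1s kdsum1 kdsum1s Fkd)
    finally have fin: "(\<Sum>j = 1..n. Nd j m (limN n P0 F Fd W Yt j l v)) = P0 (Fd m (Ytd (- (Y p + Yd p) + F l v))) + P0 (u m)" .
    have Yp: "Y p = F l v" unfolding p_def using YYt[of "F l v"] l vD P0F by (simp add: memD)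
    have "Ytd (- (Y p + Yd p) + F l v) = - (p - P0 p)"
      unfolding Yp using l pD vD by (simp add: LIN memD YtdYd)
    then show ?thesis unfolding fin u_def using m pD vD pv
      by (simp add: LIN memD P0lin FdP0 P0kd)
  qed
  have D0e: "P0 ` D = D0" by (simp add: D0_def)
  show ?thesis unfolding D0e
    by (intro conjI ballI) (assumption | rule goal1 goal2 goal3a goal3b)+

qed


end
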